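(* Consider the planar Problem B with $w=e=(0,1)$ (see context), on a closed interval $D\subset(-\pi/2,\pi/2)$. If $(\rho,C_r,C_b,\varphi)$ solves it, then $0\in D$, $\varphi(0)=0$, $d_b(0)=d_r(0)$, and $\rho'(0)=0$.
   Context: Planar setting: $x(t)=(\sin t,\cos t)$ for $t\in D$, a closed interval in $(-\pi/2,\pi/2)$; $e=(0,1)$; refractive indices $n_b>n_r>1$, outside vacuum; $\Phi_\kappa(s)=s-\sqrt{\kappa^2-1+s^2}$. For positive $\rho\in C^2(D)$, the curve $\rho(t)x(t)$ has outer unit normal $\nu_\rho(t)=\dfrac{(\rho\sin t-\rho'\cos t,\ \rho'\sin t+\rho\cos t)}{\sqrt{\rho^2+\rho'^2}}$. For $c\in\{r,b\}$ and a constant $C_c$: $m_c(t)=\frac1{n_c}\big(x(t)-\Phi_{n_c}(x(t)\cdot\nu_\rho(t))\nu_\rho(t)\big)$, $d_c(t)=\dfrac{C_c-\rho(t)(1-\cos t)}{n_c-e\cdot m_c(t)}$, $f_c(t)=\rho(t)x(t)+d_c(t)m_c(t)$; the curve $f_c$ refracts the color-$c$ ray $m_c(t)$ at $f_c(t)$ into $e$ by Snell's law (index $n_c$ to $1$). A solution of Problem B on $D$: positive $\rho\in C^2(D)$, constants $C_r,C_b$ with $d_r,d_b>0$ and $f_r,f_b$ regular curves, and a $C^1$ map $\varphi:D\to D$ with $f_r(t)=f_b(\varphi(t))$ for all $t\in D$. *)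

theory Defs
  imports "HOL-Analysis.Analysis"
begin

text \<open>Planar setting: points of the plane are pairs (real, real) with the
standard inner product. The derivative rho' of rho is passed explicitly.\<close>

definition xdir :: "real \<Rightarrow> real \<times> real" where
  "xdir t = (sin t, cos t)"

definition evec :: "real \<times> real" where
  "evec = (0, 1)"

definition Phi :: "real \<Rightarrow> real \<Rightarrow> real" where
  "Phi \<kappa> s = s - sqrt (\<kappa>\<^sup>2 - 1 + s\<^sup>2)"

text \<open>Outer unit normal of the curve rho(t) x(t); rho' is the derivative of rho.\<close>
definition nu :: "(real \<Rightarrow> real) \<Rightarrow> (real \<Rightarrow> real) \<Rightarrow> real \<Rightarrow> real \<times> real" where
  "nu \<rho> \<rho>' t = (1 / sqrt ((\<rho> t)\<^sup>2 + (\<rho>' t)\<^sup>2)) *\<^sub>R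
      (\<rho> t * sin t - \<rho>' t * cos t, \<rho>' t * sin t + \<rho> t * cos t)"

definition mC :: "real \<Rightarrow> (real \<Rightarrow> real) \<Rightarrow> (real \<Rightarrow> real) \<Rightarrow> real \<Rightarrow> real \<times> real" where
  "mC n \<rho> \<rho>' t = (1 / n) *\<^sub>R
      (xdir t - Phi n (xdir t \<bullet> nu \<rho> \<rho>' t) *\<^sub>R nu \<rho> \<rho>' t)"

definition dC :: "real \<Rightarrow> real \<Rightarrow> (real \<Rightarrow> real) \<Rightarrow> (real \<Rightarrow> real) \<Rightarrow> real \<Rightarrow> real" where
  "dC n C \<rho> \<rho>' t = (C - \<rho> t * (1 - cos t)) / (n - evec \<bullet> mC n \<rho> \<rho>' t)"

definition fC :: "real \<Rightarrow> real \<Rightarrow> (real \<Rightarrow> real) \<Rightarrow> (real \<Rightarrow> real) \<Rightarrow> real \<Rightarrow> real \<times> real" where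
  "fC n C \<rho> \<rho>' t = \<rho> t *\<^sub>R xdir t + dC n C \<rho> \<rho>' t *\<^sub>R mC n \<rho> \<rho>' t"

definition regular_curve_on :: "real set \<Rightarrow> (real \<Rightarrow> real \<times> real) \<Rightarrow> bool" where
  "regular_curve_on D f \<longleftrightarrow> (\<exists>f'. (\<forall>t\<in>D. (f has_vector_derivative f' t) (at t within D) \<and> f' t \<noteq> 0)
      \<and> continuous_on D f')"

definition C1_on :: "real set \<Rightarrow> (real \<Rightarrow> real) \<Rightarrow> bool" where
  "C1_on D g \<longleftrightarrow> (\<exists>g'. (\<forall>t\<in>D. (g has_real_derivative g' t) (at t within D)) \<and> continuous_on D g')"

end

theory Submission imports Defs begin

lemma nu_unit: assumes "0 < \<rho> t" shows "norm (nu \<rho> \<rho>' t) = 1"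
proof -
  have p: "0 < (\<rho> t)\<^sup>2 + (\<rho>' t)\<^sup>2" using assms by (simp add: add_pos_nonneg)
  have e: "(\<rho> t * sin t - \<rho>' t * cos t)\<^sup>2 + (\<rho>' t * sin t + \<rho> t * cos t)\<^sup>2 = (\<rho> t)\<^sup>2 + (\<rho>' t)\<^sup>2"
    using sin_cos_squared_add[of t] by algebra
  have sp: "0 < sqrt ((\<rho> t)\<^sup>2 + (\<rho>' t)\<^sup>2)" using p by simp
  show ?thesis unfolding nu_def norm_scaleR using sp assms
    by (simp add: norm_Pair e)
qed

lemma xdir_unit: "norm (xdir t) = 1"
  by (simp add: xdir_def norm_Pair)

lemma m_unit:
  fixes x v :: "real \<times> real"
  assumes "norm x = 1" "norm v = 1" "1 < n"
  shows "norm ((1/n) *\<^sub>R (x - Phi n (x \<bullet> v) *\<^sub>R v)) = 1"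
proof -
  define s where "s = x \<bullet> v"
  define r where "r = sqrt (n\<^sup>2 - 1 + s\<^sup>2)"
  have r2: "r\<^sup>2 = n\<^sup>2 - 1 + s\<^sup>2" unfolding r_def using assms(3)
    by (simp add: add_nonneg_nonneg)
  have xx: "x \<bullet> x = 1" "v \<bullet> v = 1" using assms by (simp_all add: power2_norm_eq_inner[symmetric])
  have "(x - Phi n s *\<^sub>R v) \<bullet> (x - Phi n s *\<^sub>R v) = x \<bullet> x - 2 * Phi n s * s + (Phi n s)\<^sup>2 * (v \<bullet> v)"
    by (simp add: inner_diff inner_commute s_def power2_eq_square algebra_simps)
  also have "\<dots> = n\<^sup>2" using xx r2 unfolding Phi_def r_def[symmetric]
    by (simp add: power2_eq_square algebra_simps)
  finally have "norm (x - Phi n s *\<^sub>R v) = n" using assms(3)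
    by (metis less_trans norm_ge_zero power2_norm_eq_inner real_sqrt_abs real_sqrt_unique zero_less_one abs_of_nonneg order_less_imp_le)
  then show ?thesis using assms(3) by (simp add: s_def)
qed

lemma norm_deriv:
  fixes g :: "real \<Rightarrow> real \<times> real"
  assumes "(g has_vector_derivative G) (at t within S)" "g t \<noteq> 0"
  shows "((\<lambda>t. norm (g t)) has_real_derivative ((g t \<bullet> G) / norm (g t))) (at t within S)"
proof -
  have "((\<lambda>t. norm (g t)) has_derivative (\<lambda>h. sgn (g t) \<bullet> (h *\<^sub>R G))) (at t within S)"
    using has_derivative_compose[OF assms(1)[unfolded has_vector_derivative_def] has_derivative_norm[OF assms(2)]]
    by (simp add: o_def) (metis inner_commute)
  moreover have "(\<lambda>h. sgn (g t) \<bullet> (h *\<^sub>R G)) = (*) ((g t \<bullet> G) / norm (g t))"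
    by (auto simp: sgn_div_norm inner_scaleR_left inner_scaleR_right divide_inverse mult_ac)
  ultimately show ?thesis unfolding has_field_derivative_def by simp
qed

lemma xdir_deriv: "((\<lambda>t. \<rho> t *\<^sub>R xdir t) has_vector_derivative (r' *\<^sub>R xdir t + \<rho> t *\<^sub>R (cos t, - sin t))) (at t within S)"
  if "(\<rho> has_real_derivative r') (at t within S)"
proof -
  have "(xdir has_vector_derivative (cos t, - sin t)) (at t within S)"
    unfolding xdir_def
    by (auto intro!: derivative_eq_intros simp: has_real_derivative_iff_has_vector_derivative[symmetric])
  from has_vector_derivative_scaleR[OF that this] show ?thesis by (simp add: add.commute)
qed

lemma tangent:
  assumes "0 < \<rho> t"
  shows "(\<rho>' t *\<^sub>R xdir t + \<rho> t *\<^sub>R (cos t, - sin t)) \<bullet> nu \<rho> \<rho>' t = 0"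
    and "(\<rho>' t *\<^sub>R xdir t + \<rho> t *\<^sub>R (cos t, - sin t)) \<bullet> xdir t = \<rho>' t"
proof -
  have "(\<rho>' t *\<^sub>R xdir t + \<rho> t *\<^sub>R (cos t, - sin t)) \<bullet> (\<rho> t * sin t - \<rho>' t * cos t, \<rho>' t * sin t + \<rho> t * cos t) = 0"
    unfolding xdir_def by (simp add: field_simps)
  then show "(\<rho>' t *\<^sub>R xdir t + \<rho> t *\<^sub>R (cos t, - sin t)) \<bullet> nu \<rho> \<rho>' t = 0"
    unfolding nu_def inner_scaleR_right by simp
  have "(\<rho>' t *\<^sub>R xdir t + \<rho> t *\<^sub>R (cos t, - sin t)) \<bullet> xdir t = \<rho>' t * ((sin t)\<^sup>2 + (cos t)\<^sup>2)"
    unfolding xdir_def by (simp add: algebra_simps power2_eq_square del: sin_cos_squared_add sin_cos_squared_add2 sin_cos_squared_add3)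
  then show "(\<rho>' t *\<^sub>R xdir t + \<rho> t *\<^sub>R (cos t, - sin t)) \<bullet> xdir t = \<rho>' t" by simp
qed

lemma m_unit': "0 < \<rho> t \<Longrightarrow> 1 < n \<Longrightarrow> norm (mC n \<rho> \<rho>' t) = 1"
  unfolding mC_def by (rule m_unit[OF xdir_unit nu_unit])

lemma fermat:
  fixes \<rho> \<rho>' :: "real \<Rightarrow> real" and F :: "real \<Rightarrow> real \<times> real"
  assumes ab: "a < b" and n: "1 < n"
    and pos: "\<forall>t\<in>{a..b}. 0 < \<rho> t"
    and d1: "\<forall>t\<in>{a..b}. (\<rho> has_real_derivative \<rho>' t) (at t within {a..b})"
    and dpos: "\<forall>t\<in>{a..b}. 0 < dC n C \<rho> \<rho>' t"
    and F: "\<forall>t\<in>{a..b}. (fC n C \<rho> \<rho>' has_vector_derivative F t) (at t within {a..b})"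
    and t: "t \<in> {a..b}"
  shows "(n *\<^sub>R mC n \<rho> \<rho>' t - evec) \<bullet> F t = 0"
proof -
  define m where "m = mC n \<rho> \<rho>'"
  define d where "d = dC n C \<rho> \<rho>'"
  define f where "f = fC n C \<rho> \<rho>'"
  define g where "g = (\<lambda>s. f s - \<rho> s *\<^sub>R xdir s)"
  define h where "h = (\<lambda>s. \<rho> s + n * norm (g s) - evec \<bullet> f s)"
  have mu: "norm (m s) = 1" if "s \<in> {a..b}" for s
    unfolding m_def using m_unit' pos that n by blast
  have gd: "g s = d s *\<^sub>R m s" for s unfolding g_def f_def fC_def d_def m_def by simp
  have ng: "norm (g s) = d s" if "s \<in> {a..b}" for s
    using gd mu[OF that] dpos that unfolding d_def by force
  have hC: "h s = C" if s: "s \<in> {a..b}" for s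
  proof -
    have "evec \<bullet> m s \<le> norm evec * norm (m s)" by (rule norm_cauchy_schwarz)
    then have le: "evec \<bullet> m s \<le> 1" using mu[OF s] by (simp add: evec_def)
    have ex: "evec \<bullet> xdir s = cos s" by (simp add: evec_def xdir_def)
    have "d s * (n - evec \<bullet> m s) = C - \<rho> s * (1 - cos s)"
      unfolding d_def dC_def m_def[symmetric] using le n by simp
    then show ?thesis unfolding h_def ng[OF s] f_def fC_def
      by (simp add: inner_add_right ex d_def[symmetric] m_def[symmetric] algebra_simps)
  qed
  define T where "T = \<rho>' t *\<^sub>R xdir t + \<rho> t *\<^sub>R (cos t, - sin t)"
  have gder: "(g has_vector_derivative (F t - T)) (at t within {a..b})"
    unfolding g_def T_def f_def
    using has_vector_derivative_diff[OF F[rule_format, OF t] xdir_deriv[OF d1[rule_format, OF t]]] .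
  have gnz: "g t \<noteq> 0" using ng[OF t] dpos t d_def by force
  have ef: "((\<lambda>s. evec \<bullet> f s) has_real_derivative (evec \<bullet> F t)) (at t within {a..b})"
    unfolding has_real_derivative_iff_has_vector_derivative f_def
    by (rule bounded_linear.has_vector_derivative[OF bounded_linear_inner_right F[rule_format, OF t]])
  have hder: "(h has_real_derivative (\<rho>' t + n * ((g t \<bullet> (F t - T)) / norm (g t)) - evec \<bullet> F t)) (at t within {a..b})"
    unfolding h_def
    by (intro DERIV_diff DERIV_add DERIV_cmult d1[rule_format, OF t] norm_deriv[OF gder gnz] ef)
  have h0: "(h has_real_derivative 0) (at t within {a..b})"
    by (rule has_field_derivative_transform_within[where f="\<lambda>_. C" and d=1]) (use t hC in auto)
  have eq0: "\<rho>' t + n * ((g t \<bullet> (F t - T)) / norm (g t)) - evec \<bullet> F t = 0"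
    using vector_derivative_unique_within_closed_interval[of a b t h, unfolded cbox_interval, OF ab _ hder[unfolded has_real_derivative_iff_has_vector_derivative] h0[unfolded has_real_derivative_iff_has_vector_derivative]] t
    by simp
  have dpt: "0 < d t" using dpos t d_def by auto
  have q: "(g t \<bullet> (F t - T)) / norm (g t) = m t \<bullet> F t - m t \<bullet> T"
    using dpt ng[OF t] gd by (simp add: inner_diff_right field_simps)
  have r: "n * (m t \<bullet> T) = \<rho>' t"
    using tangent[of \<rho> t \<rho>', OF pos[rule_format, OF t]] n
    unfolding m_def mC_def T_def by (simp add: inner_diff_left inner_commute)
  have "n * ((g t \<bullet> (F t - T)) / norm (g t)) = n * (m t \<bullet> F t) - \<rho>' t"
    unfolding q r[symmetric] by (simp add: right_diff_distrib)
  with eq0 have "n * (m t \<bullet> F t) - evec \<bullet> F t = 0" by linarith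
  then show ?thesis unfolding m_def[symmetric]
    by (simp add: inner_diff_left)
qed

theorem lemma5p4:
  fixes a b n_r n_b C_r C_b :: real
    and \<rho> \<rho>' \<rho>'' \<phi> :: "real \<Rightarrow> real"
  assumes D: "-(pi/2) < a" "a < b" "b < pi/2"
    and idx: "1 < n_r" "n_r < n_b"
    and rho_pos: "\<forall>t\<in>{a..b}. 0 < \<rho> t"
    and rho_d1: "\<forall>t\<in>{a..b}. (\<rho> has_real_derivative \<rho>' t) (at t within {a..b})"
    and rho_d2: "\<forall>t\<in>{a..b}. (\<rho>' has_real_derivative \<rho>'' t) (at t within {a..b})"
    and rho_C2: "continuous_on {a..b} \<rho>''"
    and d_pos: "\<forall>t\<in>{a..b}. 0 < dC n_r C_r \<rho> \<rho>' t \<and> 0 < dC n_b C_b \<rho> \<rho>' t"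
    and f_reg: "regular_curve_on {a..b} (fC n_r C_r \<rho> \<rho>')"
               "regular_curve_on {a..b} (fC n_b C_b \<rho> \<rho>')"
    and phi_maps: "\<phi> ` {a..b} \<subseteq> {a..b}"
    and phi_C1: "C1_on {a..b} \<phi>"
    and match: "\<forall>t\<in>{a..b}. fC n_r C_r \<rho> \<rho>' t = fC n_b C_b \<rho> \<rho>' (\<phi> t)"
  shows "0 \<in> {a..b} \<and> \<phi> 0 = 0 \<and> dC n_b C_b \<rho> \<rho>' 0 = dC n_r C_r \<rho> \<rho>' 0 \<and> \<rho>' 0 = 0"
proof -
  have nb: "1 < n_b" using idx by linarith
  obtain \<phi>' where phid: "\<forall>t\<in>{a..b}. (\<phi> has_real_derivative \<phi>' t) (at t within {a..b})"
    using phi_C1 unfolding C1_on_def by blast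
  obtain Fr where Fr: "\<forall>t\<in>{a..b}. (fC n_r C_r \<rho> \<rho>' has_vector_derivative Fr t) (at t within {a..b}) \<and> Fr t \<noteq> 0"
    using f_reg(1) unfolding regular_curve_on_def by blast
  obtain Fb where Fb: "\<forall>t\<in>{a..b}. (fC n_b C_b \<rho> \<rho>' has_vector_derivative Fb t) (at t within {a..b}) \<and> Fb t \<noteq> 0"
    using f_reg(2) unfolding regular_curve_on_def by blast
  have cphi: "continuous_on {a..b} \<phi>"
    using phid DERIV_continuous continuous_on_eq_continuous_within by blast
  have "continuous_on {a..b} (\<lambda>t. t - \<phi> t)"
    by (intro continuous_intros cphi)
  moreover have "\<phi> a \<in> {a..b}" "\<phi> b \<in> {a..b}" using phi_maps D by (auto simp: image_subset_iff)
  then have "a - \<phi> a \<le> 0" "0 \<le> b - \<phi> b" by auto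
  ultimately obtain t0 where t0: "a \<le> t0" "t0 \<le> b" "t0 - \<phi> t0 = 0"
    using IVT'[of "\<lambda>t. t - \<phi> t" a 0 b] D by auto
  have t0D: "t0 \<in> {a..b}" using t0 by auto
  have fix0: "\<phi> t0 = t0" using t0 by simp
  define mr where "mr = mC n_r \<rho> \<rho>' t0"
  define mb where "mb = mC n_b \<rho> \<rho>' t0"
  define dr where "dr = dC n_r C_r \<rho> \<rho>' t0"
  define db where "db = dC n_b C_b \<rho> \<rho>' t0"
  have mru: "norm mr = 1" unfolding mr_def using m_unit' rho_pos t0D idx by blast
  have mbu: "norm mb = 1" unfolding mb_def using m_unit' rho_pos t0D nb by blast
  have dpr: "0 < dr" "0 < db" using d_pos t0D dr_def db_def by auto
  have "dr *\<^sub>R mr = db *\<^sub>R mb"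
    using match[rule_format, OF t0D] unfolding fix0 fC_def mr_def mb_def dr_def db_def by simp
  moreover have "dr = db"
    using arg_cong[OF calculation, of norm] mru mbu dpr by simp
  ultimately have meq: "mr = mb" using dpr by simp
  have "((fC n_b C_b \<rho> \<rho>' \<circ> \<phi>) has_vector_derivative (\<phi>' t0 *\<^sub>R Fb (\<phi> t0))) (at t0 within {a..b})"
  proof (rule vector_diff_chain_within)
    show "(\<phi> has_vector_derivative \<phi>' t0) (at t0 within {a..b})"
      using phid t0D has_real_derivative_iff_has_vector_derivative by blast
    show "(fC n_b C_b \<rho> \<rho>' has_vector_derivative Fb (\<phi> t0)) (at (\<phi> t0) within \<phi> ` {a..b})"
      using has_vector_derivative_within_subset[OF _ phi_maps] Fb t0D fix0 by metis
  qed
  then have "(fC n_r C_r \<rho> \<rho>' has_vector_derivative (\<phi>' t0 *\<^sub>R Fb t0)) (at t0 within {a..b})"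
    using has_vector_derivative_transform[OF t0D, of "fC n_r C_r \<rho> \<rho>'" "fC n_b C_b \<rho> \<rho>' \<circ> \<phi>"] match fix0
    by auto
  then have Freq: "Fr t0 = \<phi>' t0 *\<^sub>R Fb t0"
    using vector_derivative_unique_within_closed_interval[of a b t0, unfolded cbox_interval, OF D(2) t0D] Fr t0D by blast
  have ferr: "(n_r *\<^sub>R mr - evec) \<bullet> Fr t0 = 0"
    unfolding mr_def using fermat[OF D(2) idx(1) rho_pos rho_d1, of C_r Fr t0] d_pos Fr t0D by blast
  have ferb: "(n_b *\<^sub>R mb - evec) \<bullet> Fb t0 = 0"
    unfolding mb_def using fermat[OF D(2) nb rho_pos rho_d1, of C_b Fb t0] d_pos Fb t0D by blast
  have "\<phi>' t0 \<noteq> 0" using Fr t0D Freq by auto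
  then have ferr': "(n_r *\<^sub>R mr - evec) \<bullet> Fb t0 = 0" using ferr Freq by simp
  have "(n_b - n_r) * (mr \<bullet> Fb t0) = 0"
    using ferr' ferb meq by (simp add: inner_diff_left algebra_simps)
  then have mF: "mr \<bullet> Fb t0 = 0" using idx by simp
  then have eF: "evec \<bullet> Fb t0 = 0" using ferr' by (simp add: inner_diff_left)
  obtain p q where pq: "Fb t0 = (p, q)" by fastforce
  have "q = 0" using eF pq by (simp add: evec_def)
  moreover have "Fb t0 \<noteq> 0" using Fb t0D by blast
  ultimately have "p \<noteq> 0" using pq by (auto simp: zero_prod_def)
  then have fm: "fst mr = 0" using mF pq \<open>q = 0\<close> by (cases mr) simp
  define x where "x = xdir t0"
  define v where "v = nu \<rho> \<rho>' t0"
  define Pr where "Pr = Phi n_r (x \<bullet> v)"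
  define Pb where "Pb = Phi n_b (x \<bullet> v)"
  have mr': "mr = (1/n_r) *\<^sub>R (x - Pr *\<^sub>R v)" unfolding mr_def mC_def x_def v_def Pr_def by simp
  have mb': "mb = (1/n_b) *\<^sub>R (x - Pb *\<^sub>R v)" unfolding mb_def mC_def x_def v_def Pb_def by simp
  define c where "c = 1/n_r - 1/n_b"
  define k where "k = Pr/n_r - Pb/n_b"
  have cpos: "0 < c" unfolding c_def using idx by (simp add: frac_less2)
  have "c *\<^sub>R x = k *\<^sub>R v"
    using meq unfolding mr' mb' c_def k_def by (simp add: algebra_simps scaleR_diff_left)
  then have xK: "x = (k/c) *\<^sub>R v" using cpos
    by (metis (no_types, lifting) divide_inverse_commute less_irrefl scaleR_scaleR scaleR_one right_inverse)
  have mrv: "mr = ((k/c - Pr)/n_r) *\<^sub>R v" unfolding mr' xK scaleR_diff_left[symmetric] scaleR_scaleR by simp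
  have "k/c - Pr \<noteq> 0" using mru mrv by auto
  then have fv: "fst v = 0" using fm mrv idx by simp
  have "sin t0 = 0" using xK fv unfolding x_def xdir_def by (cases v) simp
  then have tz: "t0 = 0" using sin_eq_0_pi t0 D by auto
  have r0: "0 < \<rho> 0" using rho_pos t0D tz by auto
  have sq: "0 < sqrt ((\<rho> 0)\<^sup>2 + (\<rho>' 0)\<^sup>2)" using r0
    by (simp add: add_pos_nonneg)
  have "\<rho>' 0 = 0" using fv sq unfolding v_def nu_def tz by auto
  then show ?thesis using t0D tz fix0 \<open>dr = db\<close> unfolding dr_def db_def by auto
qed

end
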